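(* Let $ABCD$ be a convex quadrilateral in which no two opposite sides are parallel, and let $\omega_1$ be the circle with center $I_1$ and radius $r_1$ (so $\omega_1$ is tangent to the lines $AB$ and $CD$). If $\omega_1$ is also tangent to line $BC$ or to line $DA$, then $\omega_1$ is tangent to all four lines $AB,BC,CD,DA$ (so that $ABCD$ is tangential to $\omega_1$). Analogously, if the circle $\omega_2$ with center $I_2$ and radius $r_2$ is tangent to line $AB$ or line $CD$ in addition to lines $BC$ and $DA$, then $\omega_2$ is tangent to all four side lines.
   Context: Let $E$ be the intersection point of lines $AB$ and $DC$, and $F$ the intersection point of lines $AD$ and $BC$. Let $M,N$ be the midpoints of the diagonals $AC$ and $BD$; the line $MN$ is the Newton line. $I_1$ is the intersection point of the bisector line of the angle $\angle AED$ (the angle at $E$ between rays $EA$ and $ED$) with the line $MN$, and $r_1$ is the common distance from $I_1$ to the lines $AB$ and $CD$. $I_2$ is the intersection point of the bisector line of the angle $\angle AFB$ (the angle at $F$ between rays $FA$ and $FB$) with the line $MN$, and $r_2$ is the common distance from $I_2$ to the lines $BC$ and $DA$. It is assumed these intersections are single points. *)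

theory Defs
  imports "HOL-Analysis.Analysis"
begin

definition cross2 :: "real^2 \<Rightarrow> real^2 \<Rightarrow> real" where
  "cross2 u v = u$1 * v$2 - u$2 * v$1"

definition line :: "real^2 \<Rightarrow> real^2 \<Rightarrow> (real^2) set" where
  "line P Q = {P + t *\<^sub>R (Q - P) | t. True}"

definition convex_quadrilateral :: "real^2 \<Rightarrow> real^2 \<Rightarrow> real^2 \<Rightarrow> real^2 \<Rightarrow> bool" where
  "convex_quadrilateral A B C D \<longleftrightarrow>
     (cross2 (B - A) (C - B) > 0 \<and> cross2 (C - B) (D - C) > 0 \<and>
      cross2 (D - C) (A - D) > 0 \<and> cross2 (A - D) (B - A) > 0) \<or>
     (cross2 (B - A) (C - B) < 0 \<and> cross2 (C - B) (D - C) < 0 \<and>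
      cross2 (D - C) (A - D) < 0 \<and> cross2 (A - D) (B - A) < 0)"

definition parallel_lines :: "real^2 \<Rightarrow> real^2 \<Rightarrow> real^2 \<Rightarrow> real^2 \<Rightarrow> bool" where
  "parallel_lines P Q R S \<longleftrightarrow> cross2 (Q - P) (S - R) = 0"

definition angle_bisector_line :: "real^2 \<Rightarrow> real^2 \<Rightarrow> real^2 \<Rightarrow> (real^2) set" where
  "angle_bisector_line X V Y =
     {V + t *\<^sub>R ((1 / norm (X - V)) *\<^sub>R (X - V) + (1 / norm (Y - V)) *\<^sub>R (Y - V)) | t. True}"

definition tangent_to_line :: "real^2 \<Rightarrow> real \<Rightarrow> (real^2) set \<Rightarrow> bool" where
  "tangent_to_line c r L \<longleftrightarrow> (\<exists>!p. p \<in> L \<and> p \<in> sphere c r)"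

end

theory Submission
  imports Defs
begin

lemma norm2: "norm (x::real^2) = sqrt ((x$1)^2 + (x$2)^2)"
  by (simp add: norm_vec_def L2_set_def sum_2)

lemma norm2sq: "(norm (x::real^2))^2 = (x$1)^2 + (x$2)^2"
  by (simp add: norm2)

lemma vec2_eq: "(x::real^2) = y \<longleftrightarrow> x$1 = y$1 \<and> x$2 = y$2"
  by (simp add: vec_eq_iff forall_2)

lemma quad_unique:
  fixes a b c :: real
  assumes a: "a > 0"
  shows "(\<exists>!t. a*t^2 + b*t + c = 0) \<longleftrightarrow> b^2 = 4*a*c"
proof
  assume u: "\<exists>!t. a*t^2 + b*t + c = 0"
  then obtain t0 where t0: "a*t0^2 + b*t0 + c = 0" by blast
  have "a*(-b/a - t0)^2 + b*(-b/a - t0) + c = a*t0^2 + b*t0 + c"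
    using a by (simp add: field_simps power2_eq_square)
  then have "a*(-b/a - t0)^2 + b*(-b/a - t0) + c = 0" using t0 by simp
  with u t0 have "-b/a - t0 = t0" by blast
  then have "t0 = -b/(2*a)" using a by (simp add: field_simps)
  with t0 a show "b^2 = 4*a*c" by (simp add: field_simps power2_eq_square)
next
  assume d: "b^2 = 4*a*c"
  have e: "a*t^2 + b*t + c = a*(t + b/(2*a))^2" for t
    using a d by (simp add: field_simps power2_eq_square)
  show "\<exists>!t. a*t^2 + b*t + c = 0"
  proof
    show "a*(-b/(2*a))^2 + b*(-b/(2*a)) + c = 0" unfolding e using a by simp
  next
    fix t assume "a*t^2 + b*t + c = 0"
    then have "t + b/(2*a) = 0" unfolding e using a by simp
    then show "t = -b/(2*a)" by simp
  qed
qed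

lemma sqrt_eq_sq: "r \<ge> 0 \<Longrightarrow> z \<ge> 0 \<Longrightarrow> sqrt z = r \<longleftrightarrow> z = r^2"
  by auto

lemma line_range: "line P Q = range (\<lambda>t. P + t *\<^sub>R (Q - P))"
  unfolding line_def by blast

lemma ex1_range:
  assumes "inj f"
  shows "(\<exists>!p. p \<in> range f \<and> \<Phi> p) \<longleftrightarrow> (\<exists>!t. \<Phi> (f t))"
  using assms unfolding inj_def by blast

lemma tangent_iff:
  fixes P Q c :: "real^2"
  assumes PQ: "P \<noteq> Q" and r: "r \<ge> 0"
  shows "tangent_to_line c r (line P Q) \<longleftrightarrow> (cross2 (Q-P) (c-P))^2 = r^2 * (norm (Q-P))^2"
proof -
  define d where "d = Q - P"
  have d0: "d \<noteq> 0" using PQ unfolding d_def by simp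
  have inj: "inj (\<lambda>t. P + t *\<^sub>R d)"
    using d0 by (auto simp: inj_def)
  define a where "a = (d$1)^2 + (d$2)^2"
  define b where "b = 2*(d$1*(P$1-c$1) + d$2*(P$2-c$2))"
  define c0 where "c0 = (P$1-c$1)^2 + (P$2-c$2)^2 - r^2"
  have apos: "a > 0" using d0 unfolding a_def
    by (metis add_nonneg_nonneg norm2sq not_less_iff_gr_or_eq zero_less_norm_iff zero_less_power2 zero_le_power2 power_zero_numeral)
  have sph: "(P + t *\<^sub>R d) \<in> sphere c r \<longleftrightarrow> a*t^2 + b*t + c0 = 0" for t
  proof -
    have "(P + t *\<^sub>R d) \<in> sphere c r \<longleftrightarrow> sqrt ((c$1 - (P$1 + t*d$1))^2 + (c$2 - (P$2 + t*d$2))^2) = r"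
      by (simp add: dist_norm norm2)
    also have "\<dots> \<longleftrightarrow> (c$1 - (P$1 + t*d$1))^2 + (c$2 - (P$2 + t*d$2))^2 = r^2"
      using r by (intro sqrt_eq_sq) auto
    also have "\<dots> \<longleftrightarrow> a*t^2 + b*t + c0 = 0"
      unfolding a_def b_def c0_def by (simp add: power2_eq_square algebra_simps)
    finally show ?thesis .
  qed
  have "tangent_to_line c r (line P Q) \<longleftrightarrow> (\<exists>!t. a*t^2 + b*t + c0 = 0)"
    unfolding tangent_to_line_def line_range d_def[symmetric]
    using ex1_range[OF inj, of "\<lambda>p. p \<in> sphere c r"] sph by simp
  also have "\<dots> \<longleftrightarrow> b^2 = 4*a*c0" using quad_unique[OF apos] .
  also have "\<dots> \<longleftrightarrow> (cross2 d (c-P))^2 = r^2 * a"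
  proof -
    have "b^2 - 4*a*c0 = 4*(r^2*a - (cross2 d (c-P))^2)"
      unfolding a_def b_def c0_def cross2_def by (simp add: power2_eq_square algebra_simps)
    then show ?thesis by (smt (verit))
  qed
  finally show ?thesis unfolding a_def d_def norm2sq by simp
qed

lemma dist_line_sq:
  fixes P d c :: "real^2"
  shows "((d$1)^2 + (d$2)^2) * (dist c (P + t *\<^sub>R d))^2
     = (((d$1)^2 + (d$2)^2)*t + (d$1*(P$1-c$1) + d$2*(P$2-c$2)))^2 + (cross2 d (c-P))^2"
  unfolding dist_norm norm2sq by (simp add: cross2_def power2_eq_square algebra_simps)

lemma infdist_line:
  fixes P Q c :: "real^2"
  assumes PQ: "P \<noteq> Q"
  shows "infdist c (line P Q) = \<bar>cross2 (Q-P) (c-P)\<bar> / norm (Q-P)"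
proof -
  define d where "d = Q - P"
  have d0: "d \<noteq> 0" using PQ unfolding d_def by simp
  define a where "a = (d$1)^2 + (d$2)^2"
  have an: "a = (norm d)^2" unfolding a_def norm2sq ..
  have apos: "a > 0" using d0 unfolding an by simp
  define \<delta> where "\<delta> = \<bar>cross2 d (c-P)\<bar> / norm d"
  have dpos: "norm d > 0" using d0 by simp
  have lb: "\<delta> \<le> dist c (P + t *\<^sub>R d)" for t
  proof -
    have "a * (dist c (P + t *\<^sub>R d))^2 \<ge> (cross2 d (c-P))^2"
      using dist_line_sq[of d c P t] unfolding a_def by simp
    then have "(cross2 d (c-P))^2 \<le> (norm d * dist c (P + t *\<^sub>R d))^2"
      unfolding an by (simp add: power_mult_distrib)
    then have "\<bar>cross2 d (c-P)\<bar> \<le> norm d * dist c (P + t *\<^sub>R d)"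
      using power2_le_imp_le[of "\<bar>cross2 d (c-P)\<bar>" "norm d * dist c (P + t *\<^sub>R d)"] by simp
    then show ?thesis unfolding \<delta>_def using dpos by (simp add: divide_le_eq mult.commute)
  qed
  define t0 where "t0 = - (d$1*(P$1-c$1) + d$2*(P$2-c$2)) / a"
  have z: "a*t0 + (d$1*(P$1-c$1) + d$2*(P$2-c$2)) = 0"
    using apos unfolding t0_def by simp
  have "a * (dist c (P + t0 *\<^sub>R d))^2 = (cross2 d (c-P))^2"
    using dist_line_sq[of d c P t0] unfolding a_def[symmetric] z by simp
  then have "(norm d * dist c (P + t0 *\<^sub>R d))^2 = (\<bar>cross2 d (c-P)\<bar>)^2"
    unfolding an by (simp add: power_mult_distrib)
  then have "norm d * dist c (P + t0 *\<^sub>R d) = \<bar>cross2 d (c-P)\<bar>"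
    using power2_eq_iff_nonneg[of "norm d * dist c (P + t0 *\<^sub>R d)" "\<bar>cross2 d (c-P)\<bar>"] by simp
  then have eq: "dist c (P + t0 *\<^sub>R d) = \<delta>" unfolding \<delta>_def using dpos
    by (simp add: eq_divide_eq mult.commute)
  have ne: "line P Q \<noteq> {}" unfolding line_range by simp
  have "infdist c (line P Q) = \<delta>"
  proof (rule antisym)
    show "infdist c (line P Q) \<le> \<delta>"
    proof -
      have "P + t0 *\<^sub>R d \<in> line P Q" unfolding line_range d_def by blast
      from infdist_le[OF this, of c] eq show ?thesis by simp
    qed
    show "\<delta> \<le> infdist c (line P Q)"
      unfolding infdist_notempty[OF ne] unfolding line_range d_def[symmetric]
      by (rule cINF_greatest) (use lb in auto)
  qed
  then show ?thesis unfolding \<delta>_def d_def .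
qed

lemma half:
  fixes A B C D E M N I :: "real^2" and r :: real
  assumes convex: "convex_quadrilateral A B C D"
    and E: "E \<in> line A B" "E \<in> line D C"
    and M: "M = midpoint A C" and N: "N = midpoint B D"
    and I: "I \<in> angle_bisector_line A E D" "I \<in> line M N"
    and r: "r = infdist I (line A B)"
  shows "(tangent_to_line I r (line B C) \<or> tangent_to_line I r (line D A)) \<longrightarrow>
            tangent_to_line I r (line A B) \<and> tangent_to_line I r (line B C) \<and>
            tangent_to_line I r (line C D) \<and> tangent_to_line I r (line D A)"
proof -
  obtain e where Ee: "E = A + e *\<^sub>R (B - A)" using E(1) unfolding line_def by blast
  obtain f where Ef: "E = D + f *\<^sub>R (C - D)" using E(2) unfolding line_def by blast
  obtain t where It: "I = E + t *\<^sub>R ((1 / norm (A - E)) *\<^sub>R (A - E) + (1 / norm (D - E)) *\<^sub>R (D - E))"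
    using I(1) unfolding angle_bisector_line_def by blast
  obtain s where Is: "I = M + s *\<^sub>R (N - M)" using I(2) unfolding line_def by blast
  have c1: "cross2 (B-A) (C-B) \<noteq> 0" and c2: "cross2 (C-B) (D-C) \<noteq> 0"
    and c3: "cross2 (D-C) (A-D) \<noteq> 0" and c4: "cross2 (A-D) (B-A) \<noteq> 0"
    using convex unfolding convex_quadrilateral_def by auto
  have Ee1: "E$1 = A$1 + e*(B$1-A$1)" and Ee2: "E$2 = A$2 + e*(B$2-A$2)" using Ee by simp_all
  have Ef1: "E$1 = D$1 + f*(C$1-D$1)" and Ef2: "E$2 = D$2 + f*(C$2-D$2)" using Ef by simp_all
  have e0: "e \<noteq> 0"
  proof
    assume "e = 0"
    then have h: "A$1 = D$1 + f*(C$1-D$1)" "A$2 = D$2 + f*(C$2-D$2)" using Ee1 Ee2 Ef1 Ef2 by simp_all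
    have "cross2 (D-C) (A-D) = 0" unfolding cross2_def vector_minus_component h by algebra
    with c3 show False by simp
  qed
  have f0: "f \<noteq> 0"
  proof
    assume "f = 0"
    then have h: "D$1 = A$1 + e*(B$1-A$1)" "D$2 = A$2 + e*(B$2-A$2)" using Ee1 Ee2 Ef1 Ef2 by simp_all
    have "cross2 (A-D) (B-A) = 0" unfolding cross2_def vector_minus_component h by algebra
    with c4 show False by simp
  qed
  have e1: "e \<noteq> 1"
  proof
    assume "e = 1"
    then have h: "B$1 = D$1 + f*(C$1-D$1)" "B$2 = D$2 + f*(C$2-D$2)" using Ee1 Ee2 Ef1 Ef2 by simp_all
    have "cross2 (C-B) (D-C) = 0" unfolding cross2_def vector_minus_component h by algebra
    with c2 show False by simp
  qed
  have f1: "f \<noteq> 1"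
  proof
    assume "f = 1"
    then have h: "C$1 = A$1 + e*(B$1-A$1)" "C$2 = A$2 + e*(B$2-A$2)" using Ee1 Ee2 Ef1 Ef2 by simp_all
    have "cross2 (B-A) (C-B) = 0" unfolding cross2_def vector_minus_component h by algebra
    with c1 show False by simp
  qed
  define \<alpha> where "\<alpha> = (e-1)/e"
  define \<gamma> where "\<gamma> = (f-1)/f"
  have B1: "B$1 = E$1 + \<alpha>*(A$1-E$1)" and B2: "B$2 = E$2 + \<alpha>*(A$2-E$2)"
    unfolding \<alpha>_def Ee1 Ee2 using e0 by (simp_all add: field_simps)
  have C1: "C$1 = E$1 + \<gamma>*(D$1-E$1)" and C2: "C$2 = E$2 + \<gamma>*(D$2-E$2)"
    unfolding \<gamma>_def Ef1 Ef2 using f0 by (simp_all add: field_simps)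
  have a0: "\<alpha> \<noteq> 0" unfolding \<alpha>_def using e0 e1 by simp
  have g0: "\<gamma> \<noteq> 0" unfolding \<gamma>_def using f0 f1 by simp
  define x where "x = norm (A - E)"
  define y where "y = norm (D - E)"
  have AE: "A \<noteq> E" using e0 Ee c1 by (auto simp: cross2_def)
  have DE: "D \<noteq> E" using f0 Ef c2 by (auto simp: cross2_def)
  have xpos: "x > 0" unfolding x_def using AE by simp
  have ypos: "y > 0" unfolding y_def using DE by simp
  have x2: "x^2 = (A$1-E$1)^2 + (A$2-E$2)^2" unfolding x_def norm2sq by simp
  have y2: "y^2 = (D$1-E$1)^2 + (D$2-E$2)^2" unfolding y_def norm2sq by simp
  define \<kappa> where "\<kappa> = t / (x*y)"
  have I1: "I$1 = E$1 + \<kappa>*y*(A$1-E$1) + \<kappa>*x*(D$1-E$1)"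
    and I2: "I$2 = E$2 + \<kappa>*y*(A$2-E$2) + \<kappa>*x*(D$2-E$2)"
    unfolding It \<kappa>_def x_def[symmetric] y_def[symmetric] using xpos ypos
    by (simp_all add: field_simps)
  define w where "w = (A$1-E$1)*(D$2-E$2) - (A$2-E$2)*(D$1-E$1)"
  define h where "h = (A$1-E$1)*(D$1-E$1) + (A$2-E$2)*(D$2-E$2)"
  have LAB: "cross2 (B-A) (I-A) = (\<alpha>-1)*\<kappa>*x*w"
    unfolding cross2_def vector_minus_component B1 B2 I1 I2 w_def by algebra
  have LCD: "cross2 (D-C) (I-C) = (\<gamma>-1)*\<kappa>*y*w"
    unfolding cross2_def vector_minus_component C1 C2 I1 I2 w_def by algebra
  have LBC: "cross2 (C-B) (I-B) = w*(\<alpha>*\<gamma> - \<kappa>*(\<gamma>*y + \<alpha>*x))"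
    unfolding cross2_def vector_minus_component B1 B2 C1 C2 I1 I2 w_def by algebra
  have LDA: "cross2 (A-D) (I-D) = w*(\<kappa>*(x+y) - 1)"
    unfolding cross2_def vector_minus_component I1 I2 w_def by algebra
  have nAB: "(norm (B-A))^2 = (\<alpha>-1)^2*x^2"
    unfolding norm2sq vector_minus_component B1 B2 x2 by algebra
  have nCD: "(norm (D-C))^2 = (\<gamma>-1)^2*y^2"
    unfolding norm2sq vector_minus_component C1 C2 y2 by algebra
  have nBC: "(norm (C-B))^2 = \<gamma>^2*y^2 + \<alpha>^2*x^2 - 2*\<alpha>*\<gamma>*h"
    unfolding norm2sq vector_minus_component B1 B2 C1 C2 x2 y2 h_def by algebra
  have nDA: "(norm (A-D))^2 = x^2 + y^2 - 2*h"
    unfolding norm2sq vector_minus_component x2 y2 h_def by algebra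
  have newton: "cross2 (B-A) (I-A) + cross2 (D-C) (I-C) - cross2 (C-B) (I-B) - cross2 (A-D) (I-D) = 0"
    unfolding Is M N midpoint_def cross2_def by (simp add: field_simps)
  have c4': "cross2 (A-D) (B-A) = (\<alpha>-1)*w"
    unfolding cross2_def vector_minus_component B1 B2 w_def by algebra
  have w0: "w \<noteq> 0" and a1: "\<alpha> \<noteq> 1" using c4 unfolding c4' by auto
  have AB: "A \<noteq> B" using c1 by (auto simp: cross2_def)
  have BC: "B \<noteq> C" using c1 by (auto simp: cross2_def)
  have CD: "C \<noteq> D" using c2 by (auto simp: cross2_def)
  have DA: "D \<noteq> A" using c3 by (auto simp: cross2_def)
  have r0: "r \<ge> 0" using r infdist_nonneg by simp
  have "r = \<bar>cross2 (B-A) (I-A)\<bar> / norm (B-A)" using infdist_line[OF AB] r by simp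
  then have "r^2 = (cross2 (B-A) (I-A))^2 / (norm (B-A))^2" by (simp add: power_divide)
  also have "\<dots> = ((\<alpha>-1)*\<kappa>*x*w)^2 / ((\<alpha>-1)^2*x^2)" unfolding LAB nAB ..
  also have "\<dots> = \<kappa>^2*w^2"
  proof -
    have nz: "(\<alpha>-1)^2*x^2 \<noteq> 0" using a1 xpos by simp
    have "((\<alpha>-1)*\<kappa>*x*w)^2 = (\<kappa>^2*w^2)*((\<alpha>-1)^2*x^2)" by algebra
    then show ?thesis using nz by simp
  qed
  finally have rr: "r^2 = \<kappa>^2*w^2" .
  define Q1 where "Q1 = \<alpha>*\<gamma> - 2*\<kappa>*(\<gamma>*y + \<alpha>*x) + 2*\<kappa>^2*(x*y + h)"
  define Q2 where "Q2 = 1 - 2*\<kappa>*(x+y) + 2*\<kappa>^2*(x*y + h)"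
  have TAB: "tangent_to_line I r (line A B)"
    unfolding tangent_iff[OF AB r0] LAB nAB rr by algebra
  have TCD: "tangent_to_line I r (line C D)"
    unfolding tangent_iff[OF CD r0] LCD nCD rr by algebra
  have k1: "(w*(\<alpha>*\<gamma> - \<kappa>*(\<gamma>*y + \<alpha>*x)))^2 - \<kappa>^2*w^2*(\<gamma>^2*y^2 + \<alpha>^2*x^2 - 2*\<alpha>*\<gamma>*h)
      = w^2*\<alpha>*\<gamma>*Q1" unfolding Q1_def by algebra
  have k2: "(w*(\<kappa>*(x+y) - 1))^2 - \<kappa>^2*w^2*(x^2 + y^2 - 2*h) = w^2*Q2"
    unfolding Q2_def by algebra
  have TBC: "tangent_to_line I r (line B C) \<longleftrightarrow> Q1 = 0"
  proof -
    have "tangent_to_line I r (line B C) \<longleftrightarrow> w^2*\<alpha>*\<gamma>*Q1 = 0"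
      unfolding tangent_iff[OF BC r0] LBC nBC rr k1[symmetric] by simp
    then show ?thesis using w0 a0 g0 by simp
  qed
  have TDA: "tangent_to_line I r (line D A) \<longleftrightarrow> Q2 = 0"
  proof -
    have "tangent_to_line I r (line D A) \<longleftrightarrow> w^2*Q2 = 0"
      unfolding tangent_iff[OF DA r0] LDA nDA rr k2[symmetric] by simp
    then show ?thesis using w0 by simp
  qed
  have "(\<alpha>-1)*\<kappa>*x*w + (\<gamma>-1)*\<kappa>*y*w - w*(\<alpha>*\<gamma> - \<kappa>*(\<gamma>*y + \<alpha>*x)) - w*(\<kappa>*(x+y) - 1)
      = - w*(Q1 - Q2)" unfolding Q1_def Q2_def by algebra
  then have "w*(Q1-Q2) = 0" using newton unfolding LAB LCD LBC LDA by simp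
  then have "Q1 = Q2" using w0 by simp
  then show ?thesis using TAB TCD TBC TDA by simp
qed

lemma line_sym: "line P Q = line Q P"
proof -
  have *: "line P Q \<subseteq> line Q P" for P Q :: "real^2"
  proof
    fix z assume "z \<in> line P Q"
    then obtain t where "z = P + t *\<^sub>R (Q - P)" unfolding line_def by blast
    then have "z = Q + (1 - t) *\<^sub>R (P - Q)" by (simp add: algebra_simps)
    then show "z \<in> line Q P" unfolding line_def by blast
  qed
  show ?thesis using *[of P Q] *[of Q P] by blast
qed

lemma bis_sym: "angle_bisector_line X V Y = angle_bisector_line Y V X"
  unfolding angle_bisector_line_def by (simp add: add.commute)

theorem theorem4:
  fixes A B C D E F M N I1 I2 :: "real^2" and r1 r2 :: real
  assumes convex: "convex_quadrilateral A B C D"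
    and npar1: "\<not> parallel_lines A B D C"
    and npar2: "\<not> parallel_lines A D B C"
    and E: "E \<in> line A B" "E \<in> line D C"
    and F: "F \<in> line A D" "F \<in> line B C"
    and M: "M = midpoint A C"
    and N: "N = midpoint B D"
    and I1: "angle_bisector_line A E D \<inter> line M N = {I1}"
    and r1: "r1 = infdist I1 (line A B)"
    and I2: "angle_bisector_line A F B \<inter> line M N = {I2}"
    and r2: "r2 = infdist I2 (line B C)"
  shows "(tangent_to_line I1 r1 (line B C) \<or> tangent_to_line I1 r1 (line D A) \<longrightarrow>
            tangent_to_line I1 r1 (line A B) \<and> tangent_to_line I1 r1 (line B C) \<and>
            tangent_to_line I1 r1 (line C D) \<and> tangent_to_line I1 r1 (line D A))
       \<and> (tangent_to_line I2 r2 (line A B) \<or> tangent_to_line I2 r2 (line C D) \<longrightarrow>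
            tangent_to_line I2 r2 (line A B) \<and> tangent_to_line I2 r2 (line B C) \<and>
            tangent_to_line I2 r2 (line C D) \<and> tangent_to_line I2 r2 (line D A))"
proof
  have a: "I1 \<in> angle_bisector_line A E D" "I1 \<in> line M N" using I1 by auto
  show "tangent_to_line I1 r1 (line B C) \<or> tangent_to_line I1 r1 (line D A) \<longrightarrow>
            tangent_to_line I1 r1 (line A B) \<and> tangent_to_line I1 r1 (line B C) \<and>
            tangent_to_line I1 r1 (line C D) \<and> tangent_to_line I1 r1 (line D A)"
    by (rule half[OF convex E M N a r1])
next
  have cv: "convex_quadrilateral B C D A" using convex unfolding convex_quadrilateral_def by auto
  have b: "I2 \<in> angle_bisector_line B F A" "I2 \<in> line N M"
    using I2 bis_sym[of A F B] line_sym[of M N] by auto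
  have M': "M = midpoint C A" using M by (simp add: midpoint_sym)
  have "tangent_to_line I2 r2 (line C D) \<or> tangent_to_line I2 r2 (line A B) \<longrightarrow>
            tangent_to_line I2 r2 (line B C) \<and> tangent_to_line I2 r2 (line C D) \<and>
            tangent_to_line I2 r2 (line D A) \<and> tangent_to_line I2 r2 (line A B)"
    by (rule half[OF cv F(2) F(1) N M' b r2])
  then show "tangent_to_line I2 r2 (line A B) \<or> tangent_to_line I2 r2 (line C D) \<longrightarrow>
            tangent_to_line I2 r2 (line A B) \<and> tangent_to_line I2 r2 (line B C) \<and>
            tangent_to_line I2 r2 (line C D) \<and> tangent_to_line I2 r2 (line D A)" by blast
qed

end
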